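(* Let $X$ be a nonempty finite set. For all $\kappa,\lambda,\mu,\nu\in\mathcal{D}(X)$ and every $\omega\in\Omega(\lambda,\mu)$, there exists $\pi\in\Omega(\kappa,\nu)$ such that $d_{TV}(\omega,\pi)\le d_{TV}(\kappa,\lambda)+d_{TV}(\mu,\nu)$.
   Context: $\mathcal{D}(Y)$ is the set of probability distributions on a finite set $Y$. $\Omega(\mu,\nu)=\{\omega\in\mathcal{D}(X\times X)\mid\forall x:\sum_y\omega(x,y)=\mu(x),\ \sum_y\omega(y,x)=\nu(x)\}$. For distributions $\alpha,\beta$ on a finite set $Y$ (here $Y=X$ or $Y=X\times X$), $d_{TV}(\alpha,\beta)=\max_{y\in Y}|\alpha(y)-\beta(y)|$. *)

theory Defs
  imports Complex_Main
begin

definition distr :: "('y::finite \<Rightarrow> real) \<Rightarrow> bool" where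
  "distr p \<longleftrightarrow> (\<forall>y. 0 \<le> p y) \<and> (\<Sum>y\<in>UNIV. p y) = 1"

definition couplings :: "('x::finite \<Rightarrow> real) \<Rightarrow> ('x \<Rightarrow> real) \<Rightarrow> ('x \<times> 'x \<Rightarrow> real) set" where
  "couplings mu nu = {w. distr w \<and> (\<forall>x. (\<Sum>y\<in>UNIV. w (x, y)) = mu x)
                              \<and> (\<forall>x. (\<Sum>y\<in>UNIV. w (y, x)) = nu x)}"

text \<open>d_TV as defined in the paper: maximum pointwise absolute difference.\<close>
definition dTV :: "('y::finite \<Rightarrow> real) \<Rightarrow> ('y \<Rightarrow> real) \<Rightarrow> real" where
  "dTV a b = Max (range (\<lambda>y. \<bar>a y - b y\<bar>))"

end

theory Submission
  imports Defs
begin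

lemma sum_pair_univ:
  fixes f :: "('a::finite \<times> 'b::finite) \<Rightarrow> real"
  shows "(\<Sum>p\<in>UNIV. f p) = (\<Sum>x\<in>UNIV. \<Sum>y\<in>UNIV. f (x, y))"
  unfolding sum.cartesian_product UNIV_Times_UNIV by simp

lemma dTV_ge:
  fixes a b :: "'y::finite \<Rightarrow> real"
  shows "\<bar>a y - b y\<bar> \<le> dTV a b"
  unfolding dTV_def by (rule Max_ge) auto

lemma dTV_le:
  fixes a b :: "'y::finite \<Rightarrow> real"
  assumes "\<And>y. \<bar>a y - b y\<bar> \<le> c"
  shows "dTV a b \<le> c"
  unfolding dTV_def using assms by (subst Max_le_iff) auto

lemma step:
  fixes kappa lambda mu :: "'x::finite \<Rightarrow> real"
    and omega :: "'x \<times> 'x \<Rightarrow> real"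
  assumes k: "distr kappa" and l: "distr lambda"
    and w: "omega \<in> couplings lambda mu"
  shows "\<exists>w' \<in> couplings kappa mu. \<forall>p. \<bar>omega p - w' p\<bar> \<le> dTV kappa lambda"
proof -
  have wnn: "\<And>p. 0 \<le> omega p" using w by (simp add: couplings_def distr_def split_paired_all)
  have rows: "\<And>x. (\<Sum>y\<in>UNIV. omega (x, y)) = lambda x" using w by (simp add: couplings_def)
  have cols: "\<And>x. (\<Sum>y\<in>UNIV. omega (y, x)) = mu x" using w by (simp add: couplings_def)
  have lnn: "\<And>x. 0 \<le> lambda x" using l by (simp add: distr_def)
  have knn: "\<And>x. 0 \<le> kappa x" using k by (simp add: distr_def)
  have ls: "(\<Sum>x\<in>UNIV. lambda x) = 1" using l by (simp add: distr_def)
  have ks: "(\<Sum>x\<in>UNIV. kappa x) = 1" using k by (simp add: distr_def)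
  have wle: "\<And>x y. omega (x, y) \<le> lambda x"
  proof -
    fix x y
    have "omega (x, y) \<le> (\<Sum>y\<in>UNIV. omega (x, y))"
      by (rule member_le_sum) (auto simp: wnn)
    then show "omega (x, y) \<le> lambda x" using rows by simp
  qed
  define r where "r x = (if lambda x = 0 then 0 else max 0 (lambda x - kappa x) / lambda x)" for x
  define m where "m y = (\<Sum>x\<in>UNIV. r x * omega (x, y))" for y
  define D where "D = (\<Sum>x\<in>UNIV. max 0 (lambda x - kappa x))"
  define w' where "w' p = omega p * (1 - r (fst p)) + max 0 (kappa (fst p) - lambda (fst p)) * m (snd p) / D" for p
  have rl: "r x * lambda x = max 0 (lambda x - kappa x)" for x
    using knn[of x] by (auto simp: r_def)
  have r01: "0 \<le> r x \<and> r x \<le> 1" for x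
    using knn[of x] lnn[of x] by (auto simp: r_def field_simps)
  have mnn: "0 \<le> m y" for y unfolding m_def using r01 wnn by (auto intro: sum_nonneg)
  have msum: "(\<Sum>y\<in>UNIV. m y) = D"
  proof -
    have "(\<Sum>y\<in>UNIV. m y) = (\<Sum>x\<in>UNIV. \<Sum>y\<in>UNIV. r x * omega (x, y))"
      unfolding m_def by (rule sum.swap)
    also have "\<dots> = (\<Sum>x\<in>UNIV. r x * lambda x)"
      by (simp add: sum_distrib_left[symmetric] rows)
    also have "\<dots> = D" unfolding D_def by (simp add: rl)
    finally show ?thesis .
  qed
  have Dnn: "0 \<le> D" unfolding D_def by (auto intro: sum_nonneg)
  have mleD: "m y \<le> D" for y
  proof -
    have "m y \<le> (\<Sum>y\<in>UNIV. m y)" by (rule member_le_sum) (auto simp: mnn)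
    then show ?thesis using msum by simp
  qed
  have D2: "(\<Sum>x\<in>UNIV. max 0 (kappa x - lambda x)) = D"
  proof -
    have "(\<Sum>x\<in>UNIV. max 0 (kappa x - lambda x)) - D = (\<Sum>x\<in>UNIV. kappa x - lambda x)"
      unfolding D_def sum_subtractf[symmetric] by (rule sum.cong) auto
    then show ?thesis using ks ls by (simp add: sum_subtractf)
  qed
  have D0: "D = 0 \<Longrightarrow> m y = 0" for y using mnn[of y] mleD[of y] by linarith
  have wrow: "(\<Sum>y\<in>UNIV. w' (x, y)) = kappa x" for x
  proof -
    have "(\<Sum>y\<in>UNIV. w' (x, y)) = (1 - r x) * (\<Sum>y\<in>UNIV. omega (x, y))
        + max 0 (kappa x - lambda x) * (\<Sum>y\<in>UNIV. m y) / D"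
      unfolding w'_def by (simp add: sum.distrib sum_distrib_left sum_distrib_right sum_divide_distrib mult.commute)
    also have "\<dots> = kappa x"
    proof -
      have e1: "(1 - r x) * (\<Sum>y\<in>UNIV. omega (x, y)) = lambda x - max 0 (lambda x - kappa x)"
        using rl[of x] rows[of x] by (simp add: algebra_simps)
      have e2: "max 0 (kappa x - lambda x) * (\<Sum>y\<in>UNIV. m y) / D = max 0 (kappa x - lambda x)"
      proof (cases "D = 0")
        case True
        then show ?thesis using D2 by (simp add: sum_nonneg_eq_0_iff)
      next
        case False
        then show ?thesis using msum by simp
      qed
      show ?thesis unfolding e1 e2 by (simp add: max_def)
    qed
    finally show ?thesis .
  qed
  have wcol: "(\<Sum>x\<in>UNIV. w' (x, y)) = mu y" for y
  proof -
    have "(\<Sum>x\<in>UNIV. w' (x, y)) = (\<Sum>x\<in>UNIV. omega (x, y)) - m y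
        + (\<Sum>x\<in>UNIV. max 0 (kappa x - lambda x)) * m y / D"
      unfolding w'_def m_def by (simp add: sum.distrib sum_subtractf algebra_simps sum_distrib_left sum_distrib_right sum_divide_distrib)
    also have "\<dots> = mu y"
      using cols[of y] D2 D0[of y] by (cases "D = 0") auto
    finally show ?thesis .
  qed
  have w'nn: "0 \<le> w' p" for p
    unfolding w'_def using wnn[of p] r01[of "fst p"] mnn[of "snd p"] Dnn
    by (intro add_nonneg_nonneg mult_nonneg_nonneg divide_nonneg_nonneg) auto
  have w'distr: "distr w'"
    unfolding distr_def using w'nn by (simp add: sum_pair_univ wrow ks)
  have dev: "\<bar>omega p - w' p\<bar> \<le> dTV kappa lambda" for p
  proof -
    obtain x y where p: "p = (x, y)" by (cases p)
    have a0: "omega (x,y) * r x \<le> lambda x * r x"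
      by (rule mult_right_mono) (use wle r01 in auto)
    have a1: "omega (x,y) * r x \<le> max 0 (lambda x - kappa x)"
      using a0 rl[of x] by (simp add: ac_simps)
    have a2: "max 0 (kappa x - lambda x) * m y / D \<le> max 0 (kappa x - lambda x)"
    proof (cases "D = 0")
      case True then show ?thesis by simp
    next
      case False
      then have "m y / D \<le> 1" using mleD[of y] Dnn by simp
      then show ?thesis using mult_left_mono[of "m y / D" 1 "max 0 (kappa x - lambda x)"] by simp
    qed
    have b1: "0 \<le> omega (x,y) * r x" using wnn r01 by simp
    have b2: "0 \<le> max 0 (kappa x - lambda x) * m y / D" using mnn Dnn by simp
    have c: "\<bar>kappa x - lambda x\<bar> \<le> dTV kappa lambda" by (rule dTV_ge)
    have "omega p - w' p = omega (x,y) * r x - max 0 (kappa x - lambda x) * m y / D"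
      unfolding p w'_def by (simp add: algebra_simps)
    then show ?thesis using a1 a2 b1 b2 c by (simp add: abs_le_iff) linarith
  qed
  have "w' \<in> couplings kappa mu" unfolding couplings_def using w'distr wrow wcol by simp
  then show ?thesis using dev by blast
qed

lemma swap_coupling:
  fixes w :: "'x::finite \<times> 'x \<Rightarrow> real"
  assumes "w \<in> couplings a b"
  shows "(w \<circ> prod.swap) \<in> couplings b a"
proof -
  have nn: "\<forall>p. 0 \<le> w p" and s1: "(\<Sum>x\<in>UNIV. \<Sum>y\<in>UNIV. w (x, y)) = 1"
    and ra: "\<And>x. (\<Sum>y\<in>UNIV. w (x, y)) = a x" and cb: "\<And>x. (\<Sum>y\<in>UNIV. w (y, x)) = b x"
    using assms unfolding couplings_def distr_def by (auto simp: sum_pair_univ)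
  have "(\<Sum>x\<in>UNIV. \<Sum>y\<in>UNIV. w (y, x)) = (\<Sum>x\<in>UNIV. \<Sum>y\<in>UNIV. w (x, y))"
    by (rule sum.swap)
  then show ?thesis unfolding couplings_def distr_def using nn s1 ra cb
    by (simp add: sum_pair_univ)
qed

theorem corollary1:
  fixes kappa lambda mu nu :: "'x::finite \<Rightarrow> real"
    and omega :: "'x \<times> 'x \<Rightarrow> real"
  assumes "distr kappa" and "distr lambda" and "distr mu" and "distr nu"
    and "omega \<in> couplings lambda mu"
  shows "\<exists>pi \<in> couplings kappa nu. dTV omega pi \<le> dTV kappa lambda + dTV mu nu"
proof -
  obtain w1 where w1: "w1 \<in> couplings kappa mu" and d1: "\<forall>p. \<bar>omega p - w1 p\<bar> \<le> dTV kappa lambda"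
    using step[OF assms(1,2,5)] by blast
  have "(w1 \<circ> prod.swap) \<in> couplings mu kappa" by (rule swap_coupling[OF w1])
  then obtain w2 where w2: "w2 \<in> couplings nu kappa" and d2: "\<forall>p. \<bar>(w1 \<circ> prod.swap) p - w2 p\<bar> \<le> dTV nu mu"
    using step[OF assms(4,3)] by blast
  define pi where "pi = w2 \<circ> prod.swap"
  have pic: "pi \<in> couplings kappa nu" unfolding pi_def by (rule swap_coupling[OF w2])
  have sym: "dTV nu mu = dTV mu nu" unfolding dTV_def by (simp add: abs_minus_commute)
  have "\<bar>omega p - pi p\<bar> \<le> dTV kappa lambda + dTV mu nu" for p
  proof -
    have "\<bar>w1 p - pi p\<bar> \<le> dTV mu nu"
      using d2[rule_format, of "prod.swap p"] sym by (simp add: pi_def)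
    then show ?thesis using d1[rule_format, of p] by linarith
  qed
  then show ?thesis using pic dTV_le by blast
qed

end
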